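(* Let $G$ be a graph containing no cycle of length 6, let $x\in V(G)$, and let $(a,b,c)$ be a path on three distinct vertices in the induced subgraph $G[N_2(x)]$. Then there exists a vertex $v$ such that $\{v\}=N(x)\cap N(a)=N(x)\cap N(c)$.
   Context: All graphs are finite, simple and undirected; "containing no cycle of length 6" means having no subgraph (not necessarily induced) isomorphic to $C_6$. $N_i(S)$ denotes the set of vertices at distance exactly $i$ from the vertex set $S$, $N(S)=N_1(S)$, and $N(v)=N(\{v\})$, $N_2(v)=N_2(\{v\})$. *)

theory Defs
  imports Main
begin

definition simple_graph :: "'a set \<Rightarrow> ('a \<Rightarrow> 'a \<Rightarrow> bool) \<Rightarrow> bool" where
  "simple_graph V E \<longleftrightarrow> finite V \<and> (\<forall>x y. E x y \<longrightarrow> x \<in> V \<and> y \<in> V)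
     \<and> (\<forall>x y. E x y \<longrightarrow> E y x) \<and> (\<forall>x. \<not> E x x)"

definition walk_of_length :: "'a set \<Rightarrow> ('a \<Rightarrow> 'a \<Rightarrow> bool) \<Rightarrow> nat \<Rightarrow> 'a \<Rightarrow> 'a \<Rightarrow> bool" where
  "walk_of_length V E n s t \<longleftrightarrow> (\<exists>p :: nat \<Rightarrow> 'a. p 0 = s \<and> p n = t \<and>
     (\<forall>k\<le>n. p k \<in> V) \<and> (\<forall>k<n. E (p k) (p (Suc k))))"

definition nbhd_dist :: "'a set \<Rightarrow> ('a \<Rightarrow> 'a \<Rightarrow> bool) \<Rightarrow> nat \<Rightarrow> 'a set \<Rightarrow> 'a set" where
  "nbhd_dist V E i S = {y \<in> V. (\<exists>s\<in>S. walk_of_length V E i s y)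
      \<and> \<not> (\<exists>s\<in>S. \<exists>j<i. walk_of_length V E j s y)}"

definition nbhd :: "'a set \<Rightarrow> ('a \<Rightarrow> 'a \<Rightarrow> bool) \<Rightarrow> 'a \<Rightarrow> 'a set" where
  "nbhd V E v = nbhd_dist V E 1 {v}"

definition has_cycle_of_length :: "'a set \<Rightarrow> ('a \<Rightarrow> 'a \<Rightarrow> bool) \<Rightarrow> nat \<Rightarrow> bool" where
  "has_cycle_of_length V E k \<longleftrightarrow> (\<exists>f :: nat \<Rightarrow> 'a. inj_on f {0..<k} \<and> f ` {0..<k} \<subseteq> V
     \<and> (\<forall>i<k. E (f i) (f ((i + 1) mod k))))"

end

theory Submission
  imports Defs
begin

lemma walk0: "walk_of_length V E 0 s t \<longleftrightarrow> s = t \<and> s \<in> V"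
  unfolding walk_of_length_def by auto

lemma walk1: "walk_of_length V E 1 s t \<longleftrightarrow> E s t \<and> s \<in> V \<and> t \<in> V"
  unfolding walk_of_length_def
proof
  assume "\<exists>p. p 0 = s \<and> p 1 = t \<and> (\<forall>k\<le>1. p k \<in> V) \<and> (\<forall>k<1. E (p k) (p (Suc k)))"
  then show "E s t \<and> s \<in> V \<and> t \<in> V" by auto
next
  assume h: "E s t \<and> s \<in> V \<and> t \<in> V"
  show "\<exists>p. p 0 = s \<and> p 1 = t \<and> (\<forall>k\<le>1. p k \<in> V) \<and> (\<forall>k<1. E (p k) (p (Suc k)))"
    by (rule exI[of _ "\<lambda>k. if k = 0 then s else t"]) (use h in \<open>auto simp: le_Suc_eq\<close>)
qed

lemma walk2: "walk_of_length V E 2 s t \<Longrightarrow> \<exists>m. E s m \<and> E m t"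
  unfolding walk_of_length_def
proof -
  assume "\<exists>p. p 0 = s \<and> p 2 = t \<and> (\<forall>k\<le>2. p k \<in> V) \<and> (\<forall>k<2. E (p k) (p (Suc k)))"
  then obtain p where "p 0 = s" "p 2 = t" "\<forall>k<2. E (p k) (p (Suc k))" by blast
  then have "E (p 0) (p 1)" "E (p 1) (p 2)" by (auto simp: numeral_2_eq_2)
  then show ?thesis using \<open>p 0 = s\<close> \<open>p 2 = t\<close> by blast
qed

lemma N2: assumes "y \<in> nbhd_dist V E 2 {x}" "x \<in> V"
  shows "(\<exists>m. E x m \<and> E m y) \<and> \<not> E x y \<and> y \<noteq> x"
proof -
  from assms have w: "walk_of_length V E 2 x y" and y: "y \<in> V"
    and nw: "\<not> (\<exists>j<2. walk_of_length V E j x y)"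
    unfolding nbhd_dist_def by auto
  have "\<not> walk_of_length V E 0 x y" "\<not> walk_of_length V E 1 x y" using nw by auto
  then show ?thesis using walk2[OF w] walk0 walk1 y assms(2) by metis
qed

lemma nbhd_eq: assumes "simple_graph V E" shows "nbhd V E v = {y. E v y}"
  using assms unfolding nbhd_def nbhd_dist_def simple_graph_def
  by (auto simp: walk1[simplified] walk0)

theorem lemma2p1:
  fixes V :: "'a set" and E :: "'a \<Rightarrow> 'a \<Rightarrow> bool" and x a b c :: 'a
  assumes "simple_graph V E"
    and "\<not> has_cycle_of_length V E 6"
    and "x \<in> V"
    and "a \<in> nbhd_dist V E 2 {x}" and "b \<in> nbhd_dist V E 2 {x}" and "c \<in> nbhd_dist V E 2 {x}"
    and "a \<noteq> b" and "b \<noteq> c" and "a \<noteq> c"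
    and "E a b" and "E b c"
  shows "\<exists>v. {v} = nbhd V E x \<inter> nbhd V E a \<and> {v} = nbhd V E x \<inter> nbhd V E c"
proof -
  have G: "finite V" "\<And>p q. E p q \<Longrightarrow> p \<in> V \<and> q \<in> V" "\<And>p q. E p q \<Longrightarrow> E q p" "\<And>p. \<not> E p p"
    using assms(1) unfolding simple_graph_def by auto
  note A = N2[OF assms(4,3)] and B = N2[OF assms(5,3)] and C = N2[OF assms(6,3)]
  have key: "u = w" if u: "E x u" "E u a" and w: "E x w" "E w c" for u w
  proof (rule ccontr)
    assume uw: "u \<noteq> w"
    define xs where "xs = [x,u,a,b,c,w]"
    have d: "distinct xs" unfolding xs_def using uw A B C u w G assms(7-9) by auto
    have "has_cycle_of_length V E 6"
      unfolding has_cycle_of_length_def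
    proof (intro exI[of _ "nth xs"] conjI)
      show "inj_on (nth xs) {0..<6}" by (rule inj_on_nth[OF d]) (simp add: xs_def)
      show "(!) xs ` {0..<6} \<subseteq> V"
      proof
        fix z assume "z \<in> (!) xs ` {0..<6}"
        then obtain i where "i < 6" "z = xs ! i" by auto
        moreover have "length xs = 6" by (simp add: xs_def)
        ultimately have "z \<in> set xs" by (metis nth_mem)
        then show "z \<in> V" unfolding xs_def using G u w assms(10,11) by auto
      qed
      have e: "E x u" "E u a" "E a b" "E b c" "E c w" "E w x" using u w assms(10,11) G by auto
      show "\<forall>i<6. E (xs ! i) (xs ! ((i + 1) mod 6))"
      proof (intro allI impI)
        fix i :: nat assume "i < 6"
        then have "i = 0 \<or> i = 1 \<or> i = 2 \<or> i = 3 \<or> i = 4 \<or> i = 5" by auto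
        then show "E (xs ! i) (xs ! ((i + 1) mod 6))" unfolding xs_def using e by auto
      qed
    qed
    then show False using assms(2) by blast
  qed
  obtain u where u: "E x u" "E u a" using A by blast
  obtain w where w: "E x w" "E w c" using C by blast
  have uw: "u = w" using key u w .
  have 1: "{u} = nbhd V E x \<inter> nbhd V E a"
    using key u w uw G unfolding nbhd_eq[OF assms(1)] by blast
  have 2: "{u} = nbhd V E x \<inter> nbhd V E c"
    using key u w uw G unfolding nbhd_eq[OF assms(1)] by blast
  show ?thesis using 1 2 by blast
qed

end
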